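(* Let $\alpha>0$ be non-integer, $n=\lfloor\alpha\rfloor+1$, $a\in\mathbb{R}$, $a(\alpha)=a+n-1$, $c\in\mathbb{R}$, and $f:\mathbb{N}_{a(\alpha)}\times\mathbb{R}\to\mathbb{R}$. Suppose $y:\mathbb{N}_{a(\alpha)}\to\mathbb{R}$ satisfies the initial value problem $$\nabla^{\alpha}_{a(\alpha)-1}y(t)=f(t,y(t)),\quad t=a(\alpha)+1,a(\alpha)+2,\dots,\qquad \nabla^{-(n-\alpha)}_{a(\alpha)-1}y(t)\big|_{t=a(\alpha)}=y(a(\alpha))=c.$$ Then for all $t\in\mathbb{N}_{a(\alpha)}$, $$y(t)=\frac{(t-a(\alpha)+1)^{\overline{\alpha-1}}}{\Gamma(\alpha)}\,c+\nabla^{-\alpha}_{a(\alpha)}f(t,y(t)),$$ where $\nabla^{-\alpha}_{a(\alpha)}f(t,y(t))=\frac{1}{\Gamma(\alpha)}\sum_{s=a(\alpha)+1}^{t}(t-\rho(s))^{\overline{\alpha-1}}f(s,y(s))$.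
   Context: Notation: $\mathbb{N}_c=\{c,c+1,\dots\}$, $\rho(t)=t-1$, $\nabla h(t)=h(t)-h(t-1)$, $\nabla^m=\nabla(\nabla^{m-1})$. Rising factorial $t^{\overline{\gamma}}=\Gamma(t+\gamma)/\Gamma(t)$ with $0^{\overline{\gamma}}=0$. Nabla left fractional sum of order $\gamma>0$ starting at $d$: $\nabla_d^{-\gamma}h(t)=\frac{1}{\Gamma(\gamma)}\sum_{s=d+1}^{t}(t-\rho(s))^{\overline{\gamma-1}}h(s)$, with sums whose upper limit is below the lower limit equal to $0$. Nabla left fractional difference of order $\alpha$: $\nabla_d^{\alpha}h(t)=\nabla^n\nabla_d^{-(n-\alpha)}h(t)$. *)

theory Defs
  imports "HOL-Analysis.Analysis"
begin

definition rising_pow :: "real \<Rightarrow> real \<Rightarrow> real" where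
  "rising_pow t \<gamma> = (if t = 0 then 0 else Gamma (t + \<gamma>) / Gamma t)"

text \<open>Nabla left fractional sum of order gamma starting at d, evaluated at a point t of
  d + N: the sum over s = d+1, ..., t (s = d + j, j = 1 .. t - d); empty if t - d < 1.\<close>
definition nabla_frac_sum :: "real \<Rightarrow> real \<Rightarrow> (real \<Rightarrow> real) \<Rightarrow> real \<Rightarrow> real" where
  "nabla_frac_sum d \<gamma> h t =
     (1 / Gamma \<gamma>) * (\<Sum>j\<in>{1..nat \<lfloor>t - d\<rfloor>}.
         rising_pow (t - (d + real j - 1)) (\<gamma> - 1) * h (d + real j))"

definition nabla :: "(real \<Rightarrow> real) \<Rightarrow> real \<Rightarrow> real" where
  "nabla h t = h t - h (t - 1)"

definition nabla_pow :: "nat \<Rightarrow> (real \<Rightarrow> real) \<Rightarrow> real \<Rightarrow> real" where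
  "nabla_pow m h = (nabla ^^ m) h"

definition nabla_frac_diff :: "real \<Rightarrow> real \<Rightarrow> (real \<Rightarrow> real) \<Rightarrow> real \<Rightarrow> real" where
  "nabla_frac_diff d \<alpha> h t =
     (let n = nat \<lfloor>\<alpha>\<rfloor> + 1 in nabla_pow n (nabla_frac_sum d (real n - \<alpha>) h) t)"

end

theory Submission imports Defs "HOL-Computational_Algebra.Formal_Power_Series" begin

definition K :: "real \<Rightarrow> nat \<Rightarrow> real" where "K g i = pochhammer g i / fact i"
definition KF :: "real \<Rightarrow> real fps" where "KF g = Abs_fps (K g)"

lemma K_rising:
  assumes "g > 0" shows "rising_pow (real i + 1) (g - 1) / Gamma g = K g i"
proof -
  have nz: "g \<notin> \<int>\<^sub>\<le>\<^sub>0" using assms nonpos_Ints_cases by force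
  have f: "Gamma (real i + 1) = fact i"
    using Gamma_of_int[of "int (Suc i)"] by (simp add: add.commute)
  have p: "pochhammer g i = Gamma (g + real i) / Gamma g" using pochhammer_Gamma[OF nz] by simp
  have "Gamma g > 0" using assms by simp
  then show ?thesis unfolding rising_pow_def K_def using f p
    by (simp add: field_simps add.commute add.left_commute)
qed

lemma KF_add: "KF (a + b) = KF a * KF b"
proof (rule fps_ext)
  fix m
  have "K (a+b) m = (\<Sum>k\<le>m. of_nat (m choose k) * pochhammer a k * pochhammer b (m - k)) / fact m"
    unfolding K_def pochhammer_binomial_sum ..
  also have "\<dots> = (\<Sum>k\<le>m. K a k * K b (m - k))"
    unfolding sum_divide_distrib K_def
  proof (rule sum.cong[OF refl])
    fix k assume "k \<in> {..m}"
    hence "k \<le> m" by simp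
    then show "of_nat (m choose k) * pochhammer a k * pochhammer b (m - k) / fact m =
        pochhammer a k / fact k * (pochhammer b (m - k) / fact (m - k))"
      by (simp add: binomial_fact field_simps)
  qed
  finally show "fps_nth (KF (a + b)) m = fps_nth (KF a * KF b) m"
    unfolding KF_def fps_mult_nth by (simp add: atLeast0AtMost)
qed

lemma KF_0: "KF 0 = 1"
  by (rule fps_ext) (simp add: KF_def K_def pochhammer_0_left)

lemma KF_m1: "KF (-1) = 1 - fps_X"
proof (rule fps_ext)
  fix m show "fps_nth (KF (-1)) m = fps_nth (1 - fps_X) m"
  proof (cases m)
    case 0 then show ?thesis by (simp add: KF_def K_def)
  next
    case (Suc m')
    then show ?thesis
    proof (cases m')
      case 0 then show ?thesis using Suc by (simp add: KF_def K_def)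
    next
      case (Suc m'')
      have "pochhammer (-1::real) (Suc (Suc m'')) = 0"
        by (simp add: pochhammer_rec pochhammer_rec')
      then show ?thesis using Suc \<open>m = Suc m'\<close> by (simp add: KF_def K_def fps_X_def)
    qed
  qed
qed

lemma KF_negn: "KF (- real p) = (1 - fps_X) ^ p"
proof (induction p)
  case 0 then show ?case by (simp add: KF_0)
next
  case (Suc p)
  have "KF (- real (Suc p)) = KF (-1) * KF (- real p)"
    by (simp flip: KF_add add: algebra_simps)
  then show ?case using Suc KF_m1 by simp
qed

lemma nabla_pow_Suc: "nabla_pow (Suc p) H t = nabla_pow p H t - nabla_pow p H (t - 1)"
  by (simp add: nabla_pow_def nabla_def)

lemma nabla_pow_zero:
  assumes "\<And>t. t \<le> d \<Longrightarrow> H t = 0" shows "t \<le> d \<Longrightarrow> nabla_pow p H t = 0"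
proof (induction p arbitrary: t)
  case 0 then show ?case using assms by (simp add: nabla_pow_def)
next
  case (Suc p) then show ?case by (simp add: nabla_pow_Suc)
qed

lemma nabla_pow_fps:
  assumes "\<And>t. t \<le> d \<Longrightarrow> H t = 0"
  shows "nabla_pow p H (d + real m) = fps_nth ((1 - fps_X) ^ p * Abs_fps (\<lambda>m. H (d + real m))) m"
proof (induction p arbitrary: m)
  case 0 then show ?case by (simp add: nabla_pow_def)
next
  case (Suc p m)
  let ?A = "(1 - fps_X) ^ p * Abs_fps (\<lambda>m. H (d + real m))"
  have e: "(1 - fps_X) ^ Suc p * Abs_fps (\<lambda>m. H (d + real m)) = ?A - fps_X * ?A"
    by (simp add: algebra_simps)
  show ?case
  proof (cases m)
    case 0
    then have "d + real m - 1 \<le> d" by simp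
    then have "nabla_pow p H (d + real m - 1) = 0" using nabla_pow_zero[of d H] assms by blast
    then show ?thesis unfolding nabla_pow_Suc e using Suc.IH[of 0] 0 by simp
  next
    case (Suc m')
    have eqm: "d + real m - 1 = d + real m'" using Suc by simp
    show ?thesis unfolding nabla_pow_Suc e eqm fps_sub_nth Suc.IH[of m] Suc.IH[of m'] using Suc by simp
  qed
qed

lemma frac_sum_zero: "t \<le> d \<Longrightarrow> nabla_frac_sum d g h t = 0"
  by (simp add: nabla_frac_sum_def)

lemma frac_sum_expand:
  assumes "g > 0"
  shows "nabla_frac_sum d g h (d + real m) = (\<Sum>j=1..m. h (d + real j) * K g (m - j))"
proof -
  have "(\<Sum>j=1..m. h (d + real j) * K g (m - j)) = (\<Sum>j=1..m. h (d + real j) * (rising_pow (d + real m - (d + real j - 1)) (g - 1) / Gamma g))"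
  proof (rule sum.cong[OF refl])
    fix j assume "j \<in> {1..m}"
    hence eq: "d + real m - (d + real j - 1) = real (m - j) + 1" by (simp add: of_nat_diff)
    show "h (d + real j) * K g (m - j) = h (d + real j) * (rising_pow (d + real m - (d + real j - 1)) (g - 1) / Gamma g)"
      by (simp only: eq K_rising[OF assms])
  qed
  also have "\<dots> = nabla_frac_sum d g h (d + real m)"
    unfolding nabla_frac_sum_def sum_distrib_left
    by (intro sum.cong) auto
  finally show ?thesis ..
qed

lemma frac_sum_fps:
  assumes "g > 0"
  shows "nabla_frac_sum d g y (d + real m) =
     fps_nth (KF g * Abs_fps (\<lambda>j. if j = 0 then 0 else y (d + real j))) m"
proof -
  have "fps_nth (KF g * Abs_fps (\<lambda>j. if j = 0 then 0 else y (d + real j))) m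
      = fps_nth (Abs_fps (\<lambda>j. if j = 0 then 0 else y (d + real j)) * KF g) m"
    by (simp add: mult.commute)
  also have "\<dots> = (\<Sum>j=0..m. (if j = 0 then 0 else y (d + real j)) * K g (m - j))"
    by (simp add: fps_mult_nth KF_def)
  also have "\<dots> = (\<Sum>j=1..m. y (d + real j) * K g (m - j))"
    by (simp add: sum.atLeast_Suc_atMost)
  also have "\<dots> = (\<Sum>j=1..m. y (d + real j) * (rising_pow (d + real m - (d + real j - 1)) (g - 1) / Gamma g))"
  proof (rule sum.cong[OF refl])
    fix j assume "j \<in> {1..m}"
    hence eq: "d + real m - (d + real j - 1) = real (m - j) + 1" by (simp add: of_nat_diff)
    show "y (d + real j) * K g (m - j) = y (d + real j) * (rising_pow (d + real m - (d + real j - 1)) (g - 1) / Gamma g)"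
      by (simp only: eq K_rising[OF assms])
  qed
  also have "\<dots> = nabla_frac_sum d g y (d + real m)"
    unfolding nabla_frac_sum_def sum_distrib_left
    by (intro sum.cong) auto
  finally show ?thesis ..
qed

theorem theorem5p1:
  fixes \<alpha> a c :: real and n :: nat and f :: "real \<Rightarrow> real \<Rightarrow> real" and y :: "real \<Rightarrow> real"
  assumes "\<alpha> > 0" and "\<alpha> \<notin> \<int>"
    and "n = nat \<lfloor>\<alpha>\<rfloor> + 1"
    and eq: "\<And>k::nat. k \<ge> 1 \<Longrightarrow>
           nabla_frac_diff (a + real n - 1 - 1) \<alpha> y (a + real n - 1 + real k)
             = f (a + real n - 1 + real k) (y (a + real n - 1 + real k))"
    and init1: "nabla_frac_sum (a + real n - 1 - 1) (real n - \<alpha>) y (a + real n - 1) = c"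
    and init2: "y (a + real n - 1) = c"
  shows "\<forall>k::nat. y (a + real n - 1 + real k) =
           rising_pow ((a + real n - 1 + real k) - (a + real n - 1) + 1) (\<alpha> - 1) / Gamma \<alpha> * c
           + nabla_frac_sum (a + real n - 1) \<alpha> (\<lambda>s. f s (y s)) (a + real n - 1 + real k)"
proof
  fix k :: nat
  define d where "d = a + real n - 1 - 1"
  define b where "b = a + real n - 1"
  have bd: "b = d + 1" unfolding b_def d_def by simp
  define Y where "Y = Abs_fps (\<lambda>j. if j = 0 then 0 else y (d + real j))"
  define g where "g = real n - \<alpha>"
  have gpos: "g > 0" unfolding g_def using assms(3) by linarith
  define G where "G = KF (- \<alpha>) * Y"
  have A: "nabla_frac_diff d \<alpha> y (d + real m) = fps_nth G m" for m
  proof -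
    have "nabla_frac_diff d \<alpha> y (d + real m) = nabla_pow n (nabla_frac_sum d g y) (d + real m)"
      unfolding nabla_frac_diff_def g_def using assms(3) by (simp add: Let_def)
    also have "\<dots> = fps_nth ((1 - fps_X) ^ n * Abs_fps (\<lambda>m. nabla_frac_sum d g y (d + real m))) m"
      by (rule nabla_pow_fps) (rule frac_sum_zero)
    also have "Abs_fps (\<lambda>m. nabla_frac_sum d g y (d + real m)) = KF g * Y"
      by (rule fps_ext) (simp add: frac_sum_fps[OF gpos] Y_def)
    also have "(1 - fps_X) ^ n * (KF g * Y) = G"
      unfolding G_def g_def KF_negn[symmetric] mult.assoc[symmetric] KF_add[symmetric] by simp
    finally show ?thesis .
  qed
  have G0: "fps_nth G 0 = 0" unfolding G_def Y_def by simp
  have G1: "fps_nth G 1 = c"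
  proof -
    have "fps_nth G 1 = (\<Sum>i=0..1. K (-\<alpha>) i * fps_nth Y (1 - i))"
      unfolding G_def fps_mult_nth KF_def by simp
    also have "\<dots> = y (d + 1)" by (simp add: Y_def K_def)
    finally show ?thesis using init2 bd b_def by (simp add: add.commute)
  qed
  have GS: "fps_nth G (Suc i) = f (b + real i) (y (b + real i))" if "i \<ge> 1" for i
  proof -
    have "d + real (Suc i) = b + real i" using bd by simp
    then have "nabla_frac_diff d \<alpha> y (b + real i) = fps_nth G (Suc i)" using A[of "Suc i"] by metis
    then show ?thesis using eq[OF that] unfolding d_def b_def by simp
  qed
  have YG: "Y = G * KF \<alpha>"
  proof -
    have "G * KF \<alpha> = KF (\<alpha> + - \<alpha>) * Y" unfolding G_def KF_add by (simp add: mult_ac)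
    then show ?thesis by (simp add: KF_0)
  qed
  have "y (b + real k) = fps_nth Y (Suc k)"
    unfolding Y_def using bd by (simp add: add_ac)
  also have "\<dots> = (\<Sum>j=0..Suc k. fps_nth G j * K \<alpha> (Suc k - j))"
    unfolding YG fps_mult_nth KF_def by simp
  also have "\<dots> = fps_nth G 1 * K \<alpha> k + (\<Sum>j=Suc 1..Suc k. fps_nth G j * K \<alpha> (Suc k - j))"
    by (simp add: sum.atLeast_Suc_atMost G0)
  also have "(\<Sum>j=Suc 1..Suc k. fps_nth G j * K \<alpha> (Suc k - j)) = (\<Sum>i=1..k. fps_nth G (Suc i) * K \<alpha> (k - i))"
    by (simp only: sum.shift_bounds_cl_Suc_ivl) simp
  also have "\<dots> = (\<Sum>i=1..k. f (b + real i) (y (b + real i)) * K \<alpha> (k - i))"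
    by (rule sum.cong) (auto simp: GS)
  also have "\<dots> = nabla_frac_sum b \<alpha> (\<lambda>s. f s (y s)) (b + real k)"
    by (simp add: frac_sum_expand[OF assms(1)])
  also have "K \<alpha> k = rising_pow ((b + real k) - b + 1) (\<alpha> - 1) / Gamma \<alpha>"
    using K_rising[OF assms(1), of k] by simp
  finally show "y (a + real n - 1 + real k) =
           rising_pow ((a + real n - 1 + real k) - (a + real n - 1) + 1) (\<alpha> - 1) / Gamma \<alpha> * c
           + nabla_frac_sum (a + real n - 1) \<alpha> (\<lambda>s. f s (y s)) (a + real n - 1 + real k)"
    unfolding b_def G1 by (simp add: mult.commute)
qed

end
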